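(* Let $\mathbf q=(\mathbf r,\mathbf x)\in\mathbb Z_{\ge1}^n$ with support vector $\mathbf r=(r_1,\dots,r_d)$, $r_1<r_2<\cdots<r_d$, $d\ge 2$ (i.e. $\mathbf q$ has at least two distinct entries), and multiplicity vector $\mathbf x=(x_1,\dots,x_d)\in\mathbb Z_{\ge1}^d$. If $\Delta_{(1,\mathbf q)}$ is reflexive and has the integer decomposition property, then $$x_i\le \frac{r_{i+1}}{r_i}\qquad\text{for all } 1\le i\le d-1 .$$ Further, if there exists some $j<d$ with $r_j\nmid r_d$, then $$x_d\le \frac{r_j}{r_d \bmod r_j}.$$ Consequently, if there exists some $j<d$ with $r_j\nmid r_d$, then there are at most finitely many vectors $\mathbf q$ supported on $\mathbf r$ (i.e. finitely many multiplicity vectors $\mathbf x$) for which $\Delta_{(1,\mathbf q)}$ is reflexive and IDP.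
   Context: For $\mathbf q=(q_1,\dots,q_n)\in\mathbb Z_{\ge1}^n$ with $q_1\le\cdots\le q_n$, let $\Delta_{(1,\mathbf q)}=\mathrm{conv}\{e_1,\dots,e_n,-\sum_{i=1}^n q_ie_i\}\subset\mathbb R^n$, where $e_i$ are the standard basis vectors. A lattice polytope $P\subset\mathbb R^n$ has the integer decomposition property (IDP) if for every integer $m\ge1$, every point of $mP\cap\mathbb Z^n$ is a sum of $m$ points of $P\cap\mathbb Z^n$. A lattice polytope is reflexive if, after translation by an integer vector, the origin lies in its interior and its polar dual is also a lattice polytope; it is known that $\Delta_{(1,\mathbf q)}$ is reflexive if and only if $q_i$ divides $1+\sum_{j=1}^n q_j$ for every $i$. Given distinct positive integers $r_1,\dots,r_d$ and positive integers $x_1,\dots,x_d$, the notation $\mathbf q=(\mathbf r,\mathbf x)=(r_1^{x_1},\dots,r_d^{x_d})$ denotes the vector consisting of $x_1$ copies of $r_1$, then $x_2$ copies of $r_2$, ..., then $x_d$ copies of $r_d$; $\mathbf r$ is called the support vector and $\mathbf x$ the multiplicity vector of $\mathbf q$, and $\mathbf q$ is "supported on $\mathbf r$". *)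

theory Defs
  imports Complex_Main
begin

text \<open>Points of R^n are represented as functions nat => real vanishing outside {0..<n};
  coordinate i (1-based in the paper) is index i-1 here.\<close>

definition supp_in :: "nat \<Rightarrow> (nat \<Rightarrow> real) \<Rightarrow> bool" where
  "supp_in n x \<longleftrightarrow> (\<forall>i\<ge>n. x i = 0)"

definition lattice_pts :: "nat \<Rightarrow> (nat \<Rightarrow> real) set" where
  "lattice_pts n = {x. supp_in n x \<and> (\<forall>i. x i \<in> \<int>)}"

definition conv_list :: "(nat \<Rightarrow> real) list \<Rightarrow> (nat \<Rightarrow> real) set" where
  "conv_list V = {x. \<exists>c::nat \<Rightarrow> real. (\<forall>k<length V. c k \<ge> 0) \<and> (\<Sum>k<length V. c k) = 1 \<and>
                      x = (\<lambda>i. \<Sum>k<length V. c k * (V ! k) i)}"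

definition dilate :: "nat \<Rightarrow> (nat \<Rightarrow> real) set \<Rightarrow> (nat \<Rightarrow> real) set" where
  "dilate m P = (\<lambda>x. (\<lambda>i. real m * x i)) ` P"

definition lattice_polytope :: "nat \<Rightarrow> (nat \<Rightarrow> real) set \<Rightarrow> bool" where
  "lattice_polytope n P \<longleftrightarrow> (\<exists>V. V \<noteq> [] \<and> set V \<subseteq> lattice_pts n \<and> P = conv_list V)"

definition interior_n :: "nat \<Rightarrow> (nat \<Rightarrow> real) set \<Rightarrow> (nat \<Rightarrow> real) set" where
  "interior_n n S = {x. supp_in n x \<and> (\<exists>e>0. \<forall>y. supp_in n y \<and> (\<forall>i<n. \<bar>y i - x i\<bar> < e) \<longrightarrow> y \<in> S)}"

definition polar_n :: "nat \<Rightarrow> (nat \<Rightarrow> real) set \<Rightarrow> (nat \<Rightarrow> real) set" where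
  "polar_n n S = {y. supp_in n y \<and> (\<forall>x\<in>S. (\<Sum>i<n. y i * x i) \<le> 1)}"

definition reflexive_poly :: "nat \<Rightarrow> (nat \<Rightarrow> real) set \<Rightarrow> bool" where
  "reflexive_poly n P \<longleftrightarrow> lattice_polytope n P \<and>
     (\<exists>t\<in>lattice_pts n. (\<lambda>i. 0) \<in> interior_n n ((\<lambda>x i. x i - t i) ` P) \<and>
                        lattice_polytope n (polar_n n ((\<lambda>x i. x i - t i) ` P)))"

definition IDP :: "nat \<Rightarrow> (nat \<Rightarrow> real) set \<Rightarrow> bool" where
  "IDP n P \<longleftrightarrow> (\<forall>m::nat. m \<ge> 1 \<longrightarrow> (\<forall>p \<in> dilate m P \<inter> lattice_pts n.
      \<exists>xs. length xs = m \<and> set xs \<subseteq> P \<inter> lattice_pts n \<and> p = (\<lambda>i. \<Sum>j<m. (xs ! j) i)))"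

definition Delta :: "nat list \<Rightarrow> (nat \<Rightarrow> real) set" where
  "Delta q = conv_list (map (\<lambda>k. (\<lambda>i. if i = k then 1 else 0)) [0..<length q]
                        @ [(\<lambda>i. if i < length q then - real (q ! i) else 0)])"

text \<open>q = (r^x) : x!0 copies of r!0, then x!1 copies of r!1, ...\<close>
definition rep_vec :: "nat list \<Rightarrow> nat list \<Rightarrow> nat list" where
  "rep_vec r x = concat (map (\<lambda>k. replicate (x ! k) (r ! k)) [0..<length r])"

end

theory Submission
  imports Defs
begin

lemma Delta_coeffs:
  "x \<in> Delta q \<longleftrightarrow> (\<exists>c0 c. c0 \<ge> 0 \<and> (\<forall>k<length q. c k \<ge> 0) \<and> (\<Sum>k<length q. c k) + c0 = 1 \<and>
      x = (\<lambda>i. if i < length q then c i - c0 * real (q!i) else 0))"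
proof -
  define n where "n = length q"
  define V where "V = map (\<lambda>k. (\<lambda>i. if i = k then 1 else 0)) [0..<length q]
                        @ [(\<lambda>i. if i < length q then - real (q ! i) else 0)]"
  have lenV: "length V = Suc n" by (simp add: V_def n_def)
  have Vk: "k < n \<Longrightarrow> V ! k = (\<lambda>i. if i = k then 1 else 0)" for k
    by (simp add: V_def n_def nth_append)
  have Vn: "V ! n = (\<lambda>i. if i < n then - real (q ! i) else 0)"
    by (simp add: V_def n_def nth_append)
  have comb: "(\<lambda>i. \<Sum>k<length V. c k * (V ! k) i) = (\<lambda>i. if i < n then c i - c n * real (q!i) else 0)" for c :: "nat \<Rightarrow> real"
  proof
    fix i
    have "(\<Sum>k<length V. c k * (V ! k) i) = (\<Sum>k<n. c k * (if i = k then 1 else 0)) + c n * (if i < n then - real (q ! i) else 0)"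
      by (simp add: lenV Vk Vn)
    also have "(\<Sum>k<n. c k * (if i = k then 1 else 0)) = (if i < n then c i else 0)"
      by (simp add: if_distrib[of "\<lambda>v. _ * v"] cong: if_cong)
    finally show "(\<Sum>k<length V. c k * (V ! k) i) = (if i < n then c i - c n * real (q!i) else 0)" by simp
  qed
  have D: "Delta q = conv_list V" by (simp add: Delta_def V_def)
  show ?thesis
  proof
    assume "x \<in> Delta q"
    then obtain c where c: "\<forall>k<length V. c k \<ge> 0" "(\<Sum>k<length V. c k) = 1"
        "x = (\<lambda>i. \<Sum>k<length V. c k * (V ! k) i)" unfolding D conv_list_def by blast
    show "\<exists>c0 c. c0 \<ge> 0 \<and> (\<forall>k<length q. c k \<ge> 0) \<and> (\<Sum>k<length q. c k) + c0 = 1 \<and>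
      x = (\<lambda>i. if i < length q then c i - c0 * real (q!i) else 0)"
      apply (rule exI[of _ "c n"], rule exI[of _ c])
      using c comb[of c] by (auto simp: lenV n_def)
  next
    assume "\<exists>c0 c. c0 \<ge> 0 \<and> (\<forall>k<length q. c k \<ge> 0) \<and> (\<Sum>k<length q. c k) + c0 = 1 \<and>
      x = (\<lambda>i. if i < length q then c i - c0 * real (q!i) else 0)"
    then obtain c0 c where c: "c0 \<ge> 0" "\<forall>k<n. c k \<ge> 0" "(\<Sum>k<n. c k) + c0 = 1"
       "x = (\<lambda>i. if i < n then c i - c0 * real (q!i) else 0)" by (auto simp: n_def)
    define c' where "c' = c(n := c0)"
    have "c' n = c0" by (simp add: c'_def)
    have "(\<Sum>k<n. c' k) = (\<Sum>k<n. c k)" by (rule sum.cong) (auto simp: c'_def)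
    have eq: "x = (\<lambda>i. if i < n then c' i - c' n * real (q!i) else 0)"
      using c(4) by (auto simp: c'_def)
    show "x \<in> Delta q" unfolding D conv_list_def
      apply (rule CollectI, rule exI[of _ c'])
      using c \<open>c' n = c0\<close> \<open>(\<Sum>k<n. c' k) = (\<Sum>k<n. c k)\<close> eq comb[of c']
      by (auto simp: lenV less_Suc_eq c'_def)
  qed
qed

definition sx :: "nat \<Rightarrow> (nat \<Rightarrow> real) \<Rightarrow> real" where "sx n x = (\<Sum>i<n. x i)"
definition QQ :: "nat list \<Rightarrow> nat" where "QQ q = 1 + sum_list q"

lemma sum_q: "(\<Sum>i<length q. real (q!i)) = real (sum_list q)"
  by (simp add: sum_list_sum_nth lessThan_atLeast0)

lemma Delta_iff:
  "x \<in> Delta q \<longleftrightarrow> supp_in (length q) x \<and> sx (length q) x \<le> 1 \<and>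
     (\<forall>i<length q. real (QQ q) * x i + real (q!i) * (1 - sx (length q) x) \<ge> 0)"
proof -
  define n where "n = length q"
  have Qpos: "real (QQ q) > 0" by (simp add: QQ_def)
  show ?thesis unfolding Delta_coeffs n_def[symmetric]
  proof
    assume "\<exists>c0 c. c0 \<ge> 0 \<and> (\<forall>k<n. c k \<ge> 0) \<and> (\<Sum>k<n. c k) + c0 = 1 \<and>
      x = (\<lambda>i. if i < n then c i - c0 * real (q!i) else 0)"
    then obtain c0 c where c: "c0 \<ge> 0" "\<forall>k<n. c k \<ge> 0" "(\<Sum>k<n. c k) + c0 = 1"
       "x = (\<lambda>i. if i < n then c i - c0 * real (q!i) else 0)" by blast
    have "sx n x = (\<Sum>i<n. c i) - c0 * (\<Sum>i<n. real (q!i))"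
      by (simp add: sx_def c(4) sum_subtractf sum_distrib_left)
    also have "\<dots> = 1 - c0 * real (QQ q)" using c(3) by (simp add: sum_q n_def QQ_def algebra_simps)
    finally have s: "sx n x = 1 - c0 * real (QQ q)" .
    have "supp_in n x" by (simp add: supp_in_def c(4))
    moreover have "sx n x \<le> 1" using s c(1) Qpos by simp
    moreover have "\<forall>i<n. real (QQ q) * x i + real (q!i) * (1 - sx n x) \<ge> 0"
    proof (intro allI impI)
      fix i assume "i < n"
      hence "x i = c i - c0 * real (q!i)" by (simp add: c(4))
      thus "real (QQ q) * x i + real (q!i) * (1 - sx n x) \<ge> 0"
      proof -
        have "real (QQ q) * c i \<ge> 0" using c(2) Qpos \<open>i<n\<close> by simp
        moreover have "real (QQ q) * x i + real (q!i) * (1 - sx n x) = real (QQ q) * c i"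
          unfolding s \<open>x i = _\<close> by (simp add: algebra_simps)
        ultimately show ?thesis by simp
      qed
    qed
    ultimately show "supp_in n x \<and> sx n x \<le> 1 \<and> (\<forall>i<n. real (QQ q) * x i + real (q!i) * (1 - sx n x) \<ge> 0)" by blast
  next
    assume a: "supp_in n x \<and> sx n x \<le> 1 \<and> (\<forall>i<n. real (QQ q) * x i + real (q!i) * (1 - sx n x) \<ge> 0)"
    define c0 where "c0 = (1 - sx n x) / real (QQ q)"
    define c where "c = (\<lambda>i. x i + c0 * real (q!i))"
    have "c0 \<ge> 0" using a Qpos by (simp add: c0_def)
    moreover have "\<forall>k<n. c k \<ge> 0"
    proof (intro allI impI)
      fix k assume "k < n"
      hence "real (QQ q) * x k + real (q!k) * (1 - sx n x) \<ge> 0" using a by blast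
      hence "(real (QQ q) * x k + real (q!k) * (1 - sx n x)) / real (QQ q) \<ge> 0" using Qpos by simp
      thus "c k \<ge> 0" using Qpos by (simp add: c_def c0_def field_simps)
    qed
    moreover have "(\<Sum>k<n. c k) + c0 = 1"
    proof -
      have "(\<Sum>k<n. c k) + c0 = sx n x + c0 * real (QQ q)"
        by (simp add: c_def sum.distrib sx_def sum_distrib_left[symmetric] sum_q n_def QQ_def algebra_simps)
      thus ?thesis using Qpos by (simp add: c0_def)
    qed
    moreover have "x = (\<lambda>i. if i < n then c i - c0 * real (q!i) else 0)"
      using a by (auto simp: c_def supp_in_def)
    ultimately show "\<exists>c0 c. c0 \<ge> 0 \<and> (\<forall>k<n. c k \<ge> 0) \<and> (\<Sum>k<n. c k) + c0 = 1 \<and>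
      x = (\<lambda>i. if i < n then c i - c0 * real (q!i) else 0)" by blast
  qed
qed

definition dot :: "nat \<Rightarrow> (nat \<Rightarrow> real) \<Rightarrow> (nat \<Rightarrow> real) \<Rightarrow> real" where
  "dot n u v = (\<Sum>i<n. u i * v i)"

lemma polar_iff: "y \<in> polar_n n S \<longleftrightarrow> supp_in n y \<and> (\<forall>x\<in>S. dot n y x \<le> 1)"
  by (simp add: polar_n_def dot_def)

lemma dot_e: "l < n \<Longrightarrow> dot n w (\<lambda>i. if i = l then 1 else 0) = w l"
  by (simp add: dot_def if_distrib[of "\<lambda>v. _ * v"] cong: if_cong)

lemma set_conv_list: "v \<in> set W \<Longrightarrow> v \<in> conv_list W"
proof -
  assume "v \<in> set W"
  then obtain k where k: "k < length W" "W ! k = v" by (auto simp: in_set_conv_nth)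
  show ?thesis unfolding conv_list_def
    apply (rule CollectI, rule exI[of _ "\<lambda>j. if j = k then 1 else 0"])
    using k by (auto simp: if_distrib[of "\<lambda>v. v * _"] cong: if_cong)
qed

lemma extreme:
  assumes P: "polar_n n S = conv_list W" and u: "u \<in> polar_n n S" and F: "finite F" "F \<subseteq> S"
    and uF: "\<forall>f\<in>F. dot n u f = 1"
  shows "\<exists>w\<in>set W. \<forall>f\<in>F. dot n w f = 1"
proof -
  obtain c where c: "\<forall>k<length W. c k \<ge> 0" "(\<Sum>k<length W. c k) = 1"
      "u = (\<lambda>i. \<Sum>k<length W. c k * (W ! k) i)" using u unfolding P conv_list_def by blast
  define m where "m = length W"
  define \<phi> where "\<phi> v = (\<Sum>f\<in>F. dot n v f)" for v
  have Wpol: "k < m \<Longrightarrow> W ! k \<in> polar_n n S" for k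
    unfolding P m_def by (rule set_conv_list) simp
  have le1: "k < m \<Longrightarrow> f \<in> F \<Longrightarrow> dot n (W!k) f \<le> 1" for k f
    using Wpol[of k] F(2) by (auto simp: polar_iff)
  have phile: "k < m \<Longrightarrow> \<phi> (W!k) \<le> real (card F)" for k
  proof -
    assume "k < m"
    have "\<phi> (W!k) \<le> (\<Sum>f\<in>F. 1)" unfolding \<phi>_def by (rule sum_mono) (use le1 \<open>k<m\<close> in auto)
    thus ?thesis by simp
  qed
  have dotu: "dot n u f = (\<Sum>k<m. c k * dot n (W!k) f)" for f
    by (simp add: c(3) dot_def m_def sum_distrib_right sum_distrib_left mult.assoc) (rule sum.swap)
  have phiu: "\<phi> u = (\<Sum>k<m. c k * \<phi> (W!k))"
    by (simp add: \<phi>_def dotu sum_distrib_left) (rule sum.swap)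
  have "\<phi> u = real (card F)" using uF by (simp add: \<phi>_def)
  hence "(\<Sum>k<m. c k * (real (card F) - \<phi> (W!k))) = 0"
    using c(2) phiu by (simp add: right_diff_distrib sum_subtractf sum_distrib_right[symmetric] m_def)
  moreover have "\<forall>k\<in>{..<m}. c k * (real (card F) - \<phi> (W!k)) \<ge> 0"
    using c(1) phile by (auto simp: m_def)
  ultimately have z: "\<forall>k<m. c k * (real (card F) - \<phi> (W!k)) = 0"
    using sum_nonneg_eq_0_iff[of "{..<m}" "\<lambda>k. c k * (real (card F) - \<phi> (W!k))"] by simp
  obtain k where k: "k < m" "c k \<noteq> 0"
  proof (rule ccontr)
    assume "\<not> thesis"
    hence "\<forall>k<m. c k = 0" using that by blast
    hence "(\<Sum>k<m. c k) = 0" by simp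
    thus False using c(2) by (simp add: m_def)
  qed
  have "\<phi> (W!k) = real (card F)" using z k by auto
  hence "(\<Sum>f\<in>F. 1 - dot n (W!k) f) = 0" by (simp add: \<phi>_def sum_subtractf)
  hence "\<forall>f\<in>F. 1 - dot n (W!k) f = 0"
    using sum_nonneg_eq_0_iff[OF F(1), of "\<lambda>f. 1 - dot n (W!k) f"] le1[OF k(1)] by auto
  moreover have "W!k \<in> set W" using k by (simp add: m_def)
  ultimately show ?thesis by auto
qed

lemma e_in_Delta: "l < length q \<Longrightarrow> (\<lambda>i. if i = l then 1 else 0) \<in> Delta q"
  unfolding Delta_iff
proof (intro conjI allI impI)
  assume l: "l < length q"
  show "supp_in (length q) (\<lambda>i. if i = l then 1 else 0)" using l by (simp add: supp_in_def)
  have s: "sx (length q) (\<lambda>i. if i = l then 1 else 0) = 1" using l by (simp add: sx_def)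
  thus "sx (length q) (\<lambda>i. if i = l then 1 else 0) \<le> 1" by simp
  fix i show "0 \<le> real (QQ q) * (if i = l then 1 else 0) + real (q ! i) * (1 - sx (length q) (\<lambda>i. if i = l then 1 else 0))"
    by (simp add: s)
qed

lemma vq_in_Delta: "(\<lambda>i. if i < length q then - real (q ! i) else 0) \<in> Delta q"
  unfolding Delta_iff
proof (intro conjI allI impI)
  show "supp_in (length q) (\<lambda>i. if i < length q then - real (q ! i) else 0)" by (simp add: supp_in_def)
  have s: "sx (length q) (\<lambda>i. if i < length q then - real (q ! i) else 0) = 1 - real (QQ q)"
    by (simp add: sx_def sum_negf sum_q QQ_def)
  thus "sx (length q) (\<lambda>i. if i < length q then - real (q ! i) else 0) \<le> 1" by simp
  fix i assume "i < length q"
  thus "0 \<le> real (QQ q) * (if i < length q then - real (q ! i) else 0) + real (q ! i) * (1 - sx (length q) (\<lambda>i. if i < length q then - real (q ! i) else 0))"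
    by (simp add: s)
qed

lemma int_prod_one: "(a::real) \<in> \<int> \<Longrightarrow> b \<in> \<int> \<Longrightarrow> b > 0 \<Longrightarrow> a * b = 1 \<Longrightarrow> b = 1"
proof -
  assume "a \<in> \<int>" "b \<in> \<int>" "b > 0" "a * b = 1"
  then obtain x y :: int where "a = of_int x" "b = of_int y" by (auto elim!: Ints_cases)
  with \<open>b > 0\<close> \<open>a * b = 1\<close> have "y > 0" "x * y = 1"
    by (simp, metis of_int_eq_1_iff of_int_mult)
  hence "y = 1" by (simp add: zmult_eq_1_iff)
  thus "b = 1" using \<open>b = of_int y\<close> by simp
qed

lemma refl_dvd:
  assumes R: "reflexive_poly (length q) (Delta q)" and n1: "length q \<ge> 1" and k: "k < length q"
    and qk: "q ! k \<ge> 1"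
  shows "q ! k dvd QQ q"
proof -
  define n where "n = length q"
  define Q where "Q = real (QQ q)"
  have Qpos: "Q > 0" by (simp add: Q_def QQ_def)
  have qlt: "i < n \<Longrightarrow> real (q!i) < Q" for i
  proof -
    assume "i < n"
    hence "q ! i \<le> sum_list q" by (simp add: n_def elem_le_sum_list)
    thus ?thesis by (simp add: Q_def QQ_def)
  qed
  obtain t e W where t: "t \<in> lattice_pts n" and e: "e > 0"
    and int: "\<forall>y. supp_in n y \<and> (\<forall>i<n. \<bar>y i - 0\<bar> < e) \<longrightarrow> y \<in> (\<lambda>x i. x i - t i) ` Delta q"
    and W: "set W \<subseteq> lattice_pts n" "polar_n n ((\<lambda>x i. x i - t i) ` Delta q) = conv_list W"
    using R unfolding reflexive_poly_def lattice_polytope_def interior_n_def n_def[symmetric]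
    by blast
  define Img where "Img = (\<lambda>x i. x i - t i) ` Delta q"
  have img_iff: "y \<in> Img \<longleftrightarrow> (\<lambda>i. y i + t i) \<in> Delta q" for y
  proof
    assume "y \<in> Img"
    then obtain x where "x \<in> Delta q" "y = (\<lambda>i. x i - t i)" by (auto simp: Img_def)
    moreover have "(\<lambda>i. (x i - t i) + t i) = x" by auto
    ultimately show "(\<lambda>i. y i + t i) \<in> Delta q" by simp
  next
    assume "(\<lambda>i. y i + t i) \<in> Delta q"
    thus "y \<in> Img" unfolding Img_def by (intro image_eqI[where x="\<lambda>i. y i + t i"]) auto
  qed
  have tsupp: "supp_in n t" and tint: "\<forall>i. t i \<in> \<int>" using t by (auto simp: lattice_pts_def)
  define S where "S = sx n t"
  have Sint: "S \<in> \<int>" unfolding S_def sx_def using tint by (intro Ints_sum) auto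
  have "(\<lambda>i. if i < n then e/2 else 0) \<in> Img"
    using int e unfolding Img_def by (auto simp: supp_in_def)
  hence "(\<lambda>i. (if i < n then e/2 else 0) + t i) \<in> Delta q" by (simp add: img_iff)
  hence "sx n (\<lambda>i. (if i < n then e/2 else 0) + t i) \<le> 1" by (simp add: Delta_iff n_def)
  moreover have "sx n (\<lambda>i. (if i < n then e/2 else 0) + t i) = real n * (e/2) + S"
    by (simp add: sx_def S_def sum.distrib)
  moreover have "real n * (e/2) > 0" using n1 e unfolding n_def by (intro mult_pos_pos) auto
  ultimately have S1: "S < 1" by linarith
  define u0 where "u0 = (\<lambda>i. if i < n then 1 / (1 - S) else 0)"
  define F0 where "F0 = (\<lambda>l. (\<lambda>i. (if i = l then 1 else 0) - t i)) ` {..<n}"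
  have dot_u0: "dot n u0 z = (sx n (\<lambda>i. z i + t i) - S) / (1 - S)" for z
    by (simp add: dot_def u0_def sx_def S_def sum_divide_distrib[symmetric] sum.distrib)
  have "u0 \<in> polar_n n Img"
    unfolding polar_iff
  proof (intro conjI ballI)
    show "supp_in n u0" by (simp add: supp_in_def u0_def)
    fix z assume "z \<in> Img"
    hence "sx n (\<lambda>i. z i + t i) \<le> 1" by (simp add: img_iff Delta_iff n_def)
    thus "dot n u0 z \<le> 1" using S1 by (simp add: dot_u0)
  qed
  moreover have "finite F0" by (simp add: F0_def)
  moreover have "F0 \<subseteq> Img"
  proof
    fix f assume "f \<in> F0"
    then obtain l where l: "l < n" "f = (\<lambda>i. (if i = l then 1 else 0) - t i)" by (auto simp: F0_def)
    have "(\<lambda>i. f i + t i) = (\<lambda>i. if i = l then 1 else 0)" by (auto simp: l(2))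
    thus "f \<in> Img" using e_in_Delta[of l q] l(1) by (simp add: img_iff n_def)
  qed
  moreover have "\<forall>f\<in>F0. dot n u0 f = 1"
  proof
    fix f assume "f \<in> F0"
    then obtain l where l: "l < n" "f = (\<lambda>i. (if i = l then 1 else 0) - t i)" by (auto simp: F0_def)
    have "(\<lambda>i. f i + t i) = (\<lambda>i. if i = l then 1 else 0)" by (auto simp: l(2))
    moreover have "sx n (\<lambda>i. if i = l then 1 else 0) = 1" using l(1) by (simp add: sx_def)
    ultimately show "dot n u0 f = 1" using S1 by (simp add: dot_u0)
  qed
  ultimately obtain w where w: "w \<in> set W" "\<forall>f\<in>F0. dot n w f = 1"
    using extreme[of n Img W u0 F0] W(2) unfolding Img_def by blast
  define a where "a = dot n w t"
  have wl: "l < n \<Longrightarrow> w l = 1 + a" for l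
  proof -
    assume l: "l < n"
    have "(\<lambda>i. (if i = l then 1 else 0) - t i) \<in> F0" using l by (auto simp: F0_def)
    hence "dot n w (\<lambda>i. (if i = l then 1 else 0) - t i) = 1" using w(2) by blast
    moreover have "dot n w (\<lambda>i. (if i = l then 1 else 0) - t i) = w l - a"
      using dot_e[OF l, of w] by (simp add: dot_def a_def right_diff_distrib sum_subtractf)
    ultimately show ?thesis by simp
  qed
  have "a = dot n w t" by (simp add: a_def)
  also have "\<dots> = (\<Sum>i<n. (1 + a) * t i)" unfolding dot_def by (rule sum.cong) (simp_all add: wl)
  also have "\<dots> = (1 + a) * S" by (simp add: S_def sx_def sum_distrib_left)
  finally have "a = (1 + a) * S" .
  hence prod: "(1 + a) * (1 - S) = 1" by (simp add: algebra_simps)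
  have "w 0 \<in> \<int>" using w(1) W(1) by (auto simp: lattice_pts_def)
  moreover have "w 0 = 1 + a" using wl[of 0] n1 by (force simp: n_def)
  ultimately have "1 + a \<in> \<int>" by simp
  hence "1 - S = 1" using int_prod_one[OF _ _ _ prod] Sint S1 by auto
  hence S0: "S = 0" by simp
  have "(\<lambda>i. 0) \<in> Img" using int e by (auto simp: supp_in_def Img_def)
  hence "t \<in> Delta q" by (simp add: img_iff)
  moreover have "sx (length q) t = 0" using S0 by (simp add: S_def n_def)
  ultimately have tD: "\<forall>i<n. Q * t i + real (q!i) \<ge> 0" by (simp add: Delta_iff n_def Q_def)
  have tnn: "i < n \<Longrightarrow> t i \<ge> 0" for i
  proof -
    assume i: "i < n"
    obtain z where z: "t i = of_int z" using tint by (meson Ints_cases)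
    have "0 \<le> Q * t i + real (q!i)" using tD i by blast
    hence "Q * t i > - Q" using qlt[OF i] by linarith
    hence "Q * t i > Q * (-1)" by simp
    hence "t i > -1" using Qpos mult_less_cancel_left_pos by blast
    hence "z > -1" using z by simp
    thus ?thesis using z by simp
  qed
  have "(\<Sum>i<n. t i) = 0" using S0 by (simp add: S_def sx_def)
  hence "\<forall>i\<in>{..<n}. t i = 0" using sum_nonneg_eq_0_iff[of "{..<n}" t] tnn by auto
  hence t0: "t = (\<lambda>i. 0)" using tsupp unfolding supp_in_def
    by (metis lessThan_iff not_le)
  have Img0: "Img = Delta q" by (simp add: Img_def t0)
  define qk where "qk = real (q!k)"
  have qkpos: "qk > 0" using qk by (simp add: qk_def)
  define uk where "uk = (\<lambda>i. if i < n then (if i = k then 1 - Q / qk else 1) else 0)"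
  define vq where "vq = (\<lambda>i. if i < n then - real (q ! i) else 0)"
  define F1 where "F1 = insert vq ((\<lambda>l. (\<lambda>i. if i = l then 1 else (0::real))) ` ({..<n} - {k}))"
  have dot_uk: "dot n uk z = sx n z - (Q / qk) * z k" for z
  proof -
    have "dot n uk z = (\<Sum>i<n. z i - (if i = k then (Q / qk) * z k else 0))"
      unfolding dot_def by (rule sum.cong) (auto simp: uk_def algebra_simps)
    also have "\<dots> = sx n z - (Q / qk) * z k" using k by (simp add: sum_subtractf sx_def n_def)
    finally show ?thesis .
  qed
  have "uk \<in> polar_n n Img"
    unfolding polar_iff Img0
  proof (intro conjI ballI)
    show "supp_in n uk" by (simp add: supp_in_def uk_def)
    fix z assume "z \<in> Delta q"
    hence "Q * z k + qk * (1 - sx n z) \<ge> 0" using k by (simp add: Delta_iff n_def Q_def qk_def)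
    hence "(Q * z k + qk * (1 - sx n z)) / qk \<ge> 0" using qkpos by simp
    hence "(Q / qk) * z k + (1 - sx n z) \<ge> 0" using qkpos by (simp add: field_simps)
    thus "dot n uk z \<le> 1" by (simp add: dot_uk)
  qed
  moreover have "finite F1" by (simp add: F1_def)
  moreover have "F1 \<subseteq> Img"
    unfolding Img0 F1_def using e_in_Delta[of _ q] vq_in_Delta[of q]
    by (auto simp: vq_def n_def)
  moreover have "\<forall>f\<in>F1. dot n uk f = 1"
  proof
    fix f assume "f \<in> F1"
    then consider "f = vq" | l where "l < n" "l \<noteq> k" "f = (\<lambda>i. if i = l then 1 else 0)"
      by (auto simp: F1_def)
    thus "dot n uk f = 1"
    proof cases
      case 1
      have "sx n vq = 1 - Q" by (simp add: vq_def sx_def sum_negf sum_q n_def Q_def QQ_def)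
      moreover have "vq k = - qk" using k by (simp add: vq_def qk_def n_def)
      ultimately show ?thesis using 1 qkpos by (simp add: dot_uk)
    next
      case 2
      thus ?thesis by (simp add: dot_e uk_def)
    qed
  qed
  ultimately obtain w where w: "w \<in> set W" "\<forall>f\<in>F1. dot n w f = 1"
    using extreme[of n Img W uk F1] W(2) unfolding Img_def by blast
  have w1: "l < n \<Longrightarrow> l \<noteq> k \<Longrightarrow> w l = 1" for l
  proof -
    assume "l < n" "l \<noteq> k"
    hence "(\<lambda>i. if i = l then 1 else 0) \<in> F1" by (auto simp: F1_def)
    thus ?thesis using w(2) dot_e[OF \<open>l<n\<close>, of w] by auto
  qed
  have "dot n w vq = 1" using w(2) by (simp add: F1_def)
  moreover have "dot n w vq = - (\<Sum>i<n. real (q!i) + (if i = k then qk * (w k - 1) else 0))"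
    unfolding dot_def vq_def
    by (simp add: sum_negf[symmetric]) (rule sum.cong, auto simp: w1 qk_def algebra_simps)
  moreover have "(\<Sum>i<n. real (q!i) + (if i = k then qk * (w k - 1) else 0)) = (Q - 1) + qk * (w k - 1)"
    using k by (simp add: sum.distrib sum_q n_def Q_def QQ_def)
  ultimately have eq: "Q = qk * (1 - w k)" by (simp add: algebra_simps)
  obtain z where z: "w k = of_int z" using w(1) W(1) by (auto simp: lattice_pts_def elim!: Ints_cases)
  have "int (QQ q) = int (q!k) * (1 - z)"
  proof -
    have "real_of_int (int (QQ q)) = real_of_int (int (q!k) * (1 - z))"
      using eq z by (simp add: Q_def qk_def)
    thus ?thesis by (simp only: of_int_eq_iff)
  qed
  hence "int (q!k) dvd int (QQ q)" by (metis dvdI)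
  thus ?thesis by simp
qed

lemma int_div_lb: "(a::int) > 0 \<Longrightarrow> a * z + q \<ge> 0 \<Longrightarrow> - z \<le> q div a"
proof -
  assume a: "a > 0" "a * z + q \<ge> 0"
  have "(- z * a) div a = - z" using a(1) by (metis less_irrefl nonzero_mult_div_cancel_right)
  moreover have "(- z * a) div a \<le> q div a" using a by (intro zdiv_mono1) (auto simp: algebra_simps)
  ultimately show ?thesis by simp
qed

lemma idp_bound:
  assumes I: "IDP (length q) (Delta q)" and k0: "k0 < length q" "q ! k0 = a" and a1: "a \<ge> 1"
    and dvd: "a dvd QQ q"
  shows "(\<Sum>i<length q. q ! i mod a) < a"
proof (rule ccontr)
  assume "\<not> ?thesis"
  hence Mge: "(\<Sum>i<length q. q ! i mod a) \<ge> a" by simp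
  define n where "n = length q"
  define B where "B = QQ q div a"
  define D where "D = (\<Sum>i<n. q ! i div a)"
  define M where "M = (\<Sum>i<n. q ! i mod a)"
  have QB: "QQ q = a * B" using dvd by (simp add: B_def)
  have "sum_list q = (\<Sum>i<n. q ! i)" by (simp add: sum_list_sum_nth lessThan_atLeast0 n_def)
  also have "\<dots> = (\<Sum>i<n. a * (q ! i div a) + q ! i mod a)" by (rule sum.cong) (simp_all add: mult_div_mod_eq)
  also have "\<dots> = a * D + M" by (simp only: sum.distrib sum_distrib_left D_def M_def)
  finally have sq: "sum_list q = a * D + M" .
  have "a * B = 1 + a * D + M" using QB sq by (simp add: QQ_def)
  moreover have "M \<ge> a" using Mge by (simp add: M_def n_def)
  ultimately have "a * B \<ge> a * (D + 1) + 1" by (simp add: algebra_simps)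
  hence "a * B > a * (D + 1)" by simp
  hence "B > D + 1" using mult_less_cancel1 by blast
  hence BD: "B \<ge> D + 2" by simp
  define m where "m = B - D"
  have m2: "m \<ge> 2" using BD by (simp add: m_def)
  have mBD: "real m = real B - real D" using BD by (simp add: m_def)
  define Q where "Q = real (QQ q)"
  have QaB: "Q = real a * real B" by (simp add: Q_def QB)
  have Bpos: "real B > 0" using BD by simp
  have apos: "real a > 0" using a1 by simp
  have qdm: "real (q!i) = real a * real (q!i div a) + real (q!i mod a)" for i
    by (metis div_mult_mod_eq mult.commute of_nat_add of_nat_mult)
  define p where "p = (\<lambda>i. if i < n then - real (q!i div a) else 0)"
  have sxp: "sx n p = - real D" by (simp add: sx_def p_def D_def sum_negf)
  have plat: "p \<in> lattice_pts n" by (auto simp: lattice_pts_def supp_in_def p_def)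
  define x where "x = (\<lambda>i. p i / real m)"
  have mpos: "real m > 0" using m2 by simp
  have "x \<in> Delta q" unfolding Delta_iff n_def[symmetric] Q_def[symmetric]
  proof (intro conjI allI impI)
    show "supp_in n x" by (simp add: supp_in_def x_def p_def)
    have sxx: "sx n x = - real D / real m" by (simp add: sx_def x_def sum_divide_distrib[symmetric] sxp[unfolded sx_def])
    have "1 - sx n x = real B / real m" using mpos by (simp add: sxx mBD field_simps)
    moreover have "real B / real m \<ge> 0" using Bpos mpos by simp
    ultimately show "sx n x \<le> 1" by linarith
    fix i assume i: "i < n"
    have "Q * x i + real (q!i) * (1 - sx n x) = real B * real (q!i mod a) / real m"
    proof -
      have xi: "x i = - real (q!i div a) / real m" using i by (simp add: x_def p_def)
      show ?thesis unfolding xi \<open>1 - sx n x = _\<close> QaB qdm[of i] using mpos by (simp add: field_simps)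
    qed
    thus "Q * x i + real (q!i) * (1 - sx n x) \<ge> 0" by simp
  qed
  moreover have "p = (\<lambda>i. real m * x i)" using mpos by (simp add: x_def)
  ultimately have "p \<in> dilate m (Delta q)" unfolding dilate_def by blast
  with plat m2 I obtain xs where xs: "length xs = m" "set xs \<subseteq> Delta q \<inter> lattice_pts n"
      "p = (\<lambda>i. \<Sum>j<m. (xs ! j) i)"
    unfolding IDP_def n_def by (metis IntI one_le_numeral order_trans)
  have xsD: "j < m \<Longrightarrow> xs ! j \<in> Delta q" for j using xs by (auto simp: nth_mem subset_iff)
  have xsL: "j < m \<Longrightarrow> (xs ! j) i \<in> \<int>" for j i
  proof -
    assume "j < m"
    hence "xs ! j \<in> lattice_pts n" using xs nth_mem[of j xs] by auto
    thus ?thesis by (simp add: lattice_pts_def)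
  qed
  define \<beta> where "\<beta> j = 1 - sx n (xs ! j)" for j
  have bnn: "j < m \<Longrightarrow> \<beta> j \<ge> 0" for j using xsD[of j] by (simp add: Delta_iff \<beta>_def n_def)
  have bcoord: "j < m \<Longrightarrow> i < n \<Longrightarrow> Q * (xs ! j) i + real (q!i) * \<beta> j \<ge> 0" for j i
    using xsD[of j] by (simp add: Delta_iff \<beta>_def n_def Q_def)
  have "(\<Sum>j<m. \<beta> j) = real m - (\<Sum>j<m. \<Sum>i<n. (xs ! j) i)" by (simp add: \<beta>_def sum_subtractf sx_def)
  also have "(\<Sum>j<m. \<Sum>i<n. (xs ! j) i) = (\<Sum>i<n. p i)" by (simp add: xs(3)) (rule sum.swap)
  also have "\<dots> = - real D" using sxp by (simp add: sx_def)
  finally have sumb: "(\<Sum>j<m. \<beta> j) = real B" by (simp add: mBD)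
  have pk0: "p k0 = -1" using k0 a1 by (simp add: p_def n_def)
  have "\<exists>j<m. \<beta> j \<ge> real B"
  proof (rule ccontr)
    assume "\<not> ?thesis"
    hence lt: "\<forall>j<m. \<beta> j < real B" by auto
    have "j < m \<Longrightarrow> (xs ! j) k0 \<ge> 0" for j
    proof -
      assume j: "j < m"
      have "Q * (xs ! j) k0 + real a * \<beta> j \<ge> 0" using bcoord[OF j, of k0] k0 by (simp add: n_def)
      hence "real a * (real B * (xs ! j) k0 + \<beta> j) \<ge> 0" by (simp add: QaB algebra_simps)
      hence "real B * (xs ! j) k0 + \<beta> j \<ge> 0" using apos by (simp add: zero_le_mult_iff)
      moreover have "\<beta> j < real B" using lt j by blast
      ultimately have "real B * (xs ! j) k0 > real B * (-1)" by linarith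
      hence "(xs ! j) k0 > -1" using Bpos mult_less_cancel_left_pos by blast
      moreover obtain z where "(xs ! j) k0 = of_int z" using xsL[OF j] by (meson Ints_cases)
      ultimately show ?thesis by simp
    qed
    hence "(\<Sum>j<m. (xs ! j) k0) \<ge> 0" by (intro sum_nonneg) auto
    moreover have "(\<Sum>j<m. (xs ! j) k0) = -1" using pk0 xs(3) by metis
    ultimately show False by simp
  qed
  then obtain j0 where j0: "j0 < m" "\<beta> j0 \<ge> real B" by blast
  have "\<beta> j0 \<le> (\<Sum>j<m. \<beta> j)" using j0(1) bnn by (intro member_le_sum) auto
  hence bj0: "\<beta> j0 = real B" using j0 sumb by simp
  have ge: "i < n \<Longrightarrow> (xs ! j0) i \<ge> p i" for i
  proof -
    assume i: "i < n"
    obtain z where z: "(xs ! j0) i = of_int z" using xsL[OF j0(1)] by (meson Ints_cases)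
    have "Q * (xs ! j0) i + real (q!i) * real B \<ge> 0" using bcoord[OF j0(1) i] bj0 by simp
    hence "real B * (real a * (xs ! j0) i + real (q!i)) \<ge> 0" by (simp add: QaB algebra_simps)
    hence "real a * (xs ! j0) i + real (q!i) \<ge> 0" using Bpos by (simp add: zero_le_mult_iff)
    hence "real_of_int (int a * z + int (q!i)) \<ge> 0" using z by simp
    hence "int a * z + int (q!i) \<ge> 0" by linarith
    hence "- z \<le> int (q!i) div int a" using a1 by (intro int_div_lb) auto
    hence "- z \<le> int (q!i div a)" by (simp add: zdiv_int)
    hence "real_of_int (- z) \<le> real (q!i div a)" by linarith
    thus ?thesis using z i by (simp add: p_def)
  qed
  have "sx n (xs ! j0) \<ge> sx n p" unfolding sx_def by (rule sum_mono) (use ge in auto)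
  moreover have "sx n (xs ! j0) = 1 - real B" using bj0 by (simp add: \<beta>_def)
  ultimately have "real B \<le> real D + 1" using sxp by simp
  thus False using BD by linarith
qed

lemma sum_list_concat': "sum_list (concat xss) = sum_list (map sum_list (xss :: nat list list))"
  by (induct xss) auto

lemma rep_sum: "(\<Sum>i<length (rep_vec r x). f (rep_vec r x ! i)) = (\<Sum>k<length r. x!k * f (r!k))"
proof -
  have "(\<Sum>i<length (rep_vec r x). f (rep_vec r x ! i)) = sum_list (map f (rep_vec r x))"
    by (simp add: sum_list_sum_nth lessThan_atLeast0)
  also have "\<dots> = sum_list (map (\<lambda>k. x!k * f (r!k)) [0..<length r])"
    by (simp add: rep_vec_def map_concat sum_list_concat' comp_def sum_list_replicate)
  also have "\<dots> = (\<Sum>k<length r. x!k * f (r!k))"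
    by (simp add: sum_list_sum_nth lessThan_atLeast0)
  finally show ?thesis .
qed

lemma rep_mem: "k < length r \<Longrightarrow> x ! k \<ge> 1 \<Longrightarrow> \<exists>i<length (rep_vec r x). rep_vec r x ! i = r ! k"
proof -
  assume "k < length r" "x ! k \<ge> 1"
  hence "r ! k \<in> set (rep_vec r x)" unfolding rep_vec_def by force
  thus ?thesis by (simp add: in_set_conv_nth)
qed

lemma key:
  assumes x: "\<forall>k<length x. x!k \<ge> 1" "length x = length r" and rp: "\<forall>k<length r. r!k \<ge> 1"
    and R: "reflexive_poly (length (rep_vec r x)) (Delta (rep_vec r x))"
    and I: "IDP (length (rep_vec r x)) (Delta (rep_vec r x))" and l: "l < length r"
  shows "(\<Sum>k<length r. x!k * (r!k mod r!l)) < r!l"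
proof -
  define q where "q = rep_vec r x"
  obtain k0 where k0: "k0 < length q" "q ! k0 = r ! l" using rep_mem[OF l] x l by (auto simp: q_def)
  have "length q = (\<Sum>k<length r. x!k * 1)" using rep_sum[of "\<lambda>_. 1" r x] by (simp add: q_def)
  have n1: "length q \<ge> 1" using k0 by simp
  have "q ! k0 dvd QQ q" using refl_dvd[of q k0] R n1 k0 rp l by (simp add: q_def)
  hence "(\<Sum>i<length q. q ! i mod r!l) < r!l" using idp_bound[of q k0 "r!l"] I k0 rp l by (simp add: q_def)
  thus ?thesis using rep_sum[of "\<lambda>v. v mod r!l" r x] by (simp add: q_def)
qed

theorem theorem3p3:
  fixes r :: "nat list"
  assumes r_pos: "\<forall>k<length r. r ! k \<ge> 1"
      and r_sorted: "sorted_wrt (<) r"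
      and d_ge2: "length r \<ge> 2"
  shows "(\<forall>x::nat list. length x = length r \<and> (\<forall>k<length x. x ! k \<ge> 1)
            \<and> reflexive_poly (length (rep_vec r x)) (Delta (rep_vec r x))
            \<and> IDP (length (rep_vec r x)) (Delta (rep_vec r x))
          \<longrightarrow> (\<forall>i. i + 1 < length r \<longrightarrow> real (x ! i) \<le> real (r ! (i + 1)) / real (r ! i))
            \<and> (\<forall>j. j + 1 < length r \<and> \<not> (r ! j) dvd (r ! (length r - 1)) \<longrightarrow>
                   real (x ! (length r - 1)) \<le> real (r ! j) / real (r ! (length r - 1) mod r ! j)))
       \<and> ((\<exists>j. j + 1 < length r \<and> \<not> (r ! j) dvd (r ! (length r - 1))) \<longrightarrow>
           finite {x::nat list. length x = length r \<and> (\<forall>k<length x. x ! k \<ge> 1)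
                     \<and> reflexive_poly (length (rep_vec r x)) (Delta (rep_vec r x))
                     \<and> IDP (length (rep_vec r x)) (Delta (rep_vec r x))})"
proof -
  define d where "d = length r"
  have single: "x!k * f (r!k) \<le> (\<Sum>k<length r. x!k * f (r!k))" if "k < length r" for x :: "nat list" and k f
    using that by (intro member_le_sum) auto
  have A: "x ! i * r ! i < r ! (i+1)"
    if x: "length x = length r" "\<forall>k<length x. x ! k \<ge> 1"
      "reflexive_poly (length (rep_vec r x)) (Delta (rep_vec r x))"
      "IDP (length (rep_vec r x)) (Delta (rep_vec r x))" and i: "i + 1 < length r" for x i
  proof -
    have lt: "r ! i < r ! (i+1)" using r_sorted i by (simp add: sorted_wrt_iff_nth_less)
    have "(\<Sum>k<length r. x!k * (r!k mod r!(i+1))) < r!(i+1)" using key[of x r "i+1"] x r_pos i by simp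
    moreover have "x!i * (r!i mod r!(i+1)) \<le> (\<Sum>k<length r. x!k * (r!k mod r!(i+1)))"
      using single[of i x "\<lambda>v. v mod r!(i+1)"] i by simp
    ultimately show ?thesis using lt by simp
  qed
  have B: "x ! (d-1) * (r ! (d-1) mod r ! j) < r ! j"
    if x: "length x = length r" "\<forall>k<length x. x ! k \<ge> 1"
      "reflexive_poly (length (rep_vec r x)) (Delta (rep_vec r x))"
      "IDP (length (rep_vec r x)) (Delta (rep_vec r x))" and j: "j + 1 < length r" for x j
  proof -
    have "(\<Sum>k<length r. x!k * (r!k mod r!j)) < r!j" using key[of x r j] x r_pos j by simp
    moreover have "x!(d-1) * (r!(d-1) mod r!j) \<le> (\<Sum>k<length r. x!k * (r!k mod r!j))"
      using single[of "d-1" x "\<lambda>v. v mod r!j"] d_ge2 by (simp add: d_def)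
    ultimately show ?thesis by simp
  qed
  have part1: "\<forall>x::nat list. length x = length r \<and> (\<forall>k<length x. x ! k \<ge> 1)
            \<and> reflexive_poly (length (rep_vec r x)) (Delta (rep_vec r x))
            \<and> IDP (length (rep_vec r x)) (Delta (rep_vec r x))
          \<longrightarrow> (\<forall>i. i + 1 < length r \<longrightarrow> real (x ! i) \<le> real (r ! (i + 1)) / real (r ! i))
            \<and> (\<forall>j. j + 1 < length r \<and> \<not> (r ! j) dvd (r ! (length r - 1)) \<longrightarrow>
                   real (x ! (length r - 1)) \<le> real (r ! j) / real (r ! (length r - 1) mod r ! j))"
  proof (intro allI impI conjI)
    fix x :: "nat list" and i
    assume x: "length x = length r \<and> (\<forall>k<length x. x ! k \<ge> 1)
            \<and> reflexive_poly (length (rep_vec r x)) (Delta (rep_vec r x))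
            \<and> IDP (length (rep_vec r x)) (Delta (rep_vec r x))" and i: "i + 1 < length r"
    have "x ! i * r ! i < r ! (i+1)" using A[of x i] x i by blast
    hence "real (x ! i) * real (r ! i) \<le> real (r ! (i+1))" by (metis less_imp_le of_nat_le_iff of_nat_mult)
    moreover have "r ! i \<ge> 1" using r_pos i by simp
    hence "real (r ! i) > 0" by simp
    ultimately show "real (x ! i) \<le> real (r ! (i + 1)) / real (r ! i)" by (simp add: pos_le_divide_eq)
  next
    fix x :: "nat list" and j
    assume x: "length x = length r \<and> (\<forall>k<length x. x ! k \<ge> 1)
            \<and> reflexive_poly (length (rep_vec r x)) (Delta (rep_vec r x))
            \<and> IDP (length (rep_vec r x)) (Delta (rep_vec r x))"
      and j: "j + 1 < length r \<and> \<not> (r ! j) dvd (r ! (length r - 1))"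
    have "x ! (d-1) * (r ! (d-1) mod r ! j) < r ! j" using B[of x j] x j by blast
    hence "real (x ! (d-1)) * real (r ! (d-1) mod r ! j) \<le> real (r ! j)" by (metis less_imp_le of_nat_le_iff of_nat_mult)
    moreover have "r ! (d-1) mod r ! j > 0" using j by (simp add: d_def mod_greater_zero_iff_not_dvd)
    ultimately show "real (x ! (length r - 1)) \<le> real (r ! j) / real (r ! (length r - 1) mod r ! j)"
      by (simp add: pos_le_divide_eq d_def)
  qed
  have part2: "finite {x::nat list. length x = length r \<and> (\<forall>k<length x. x ! k \<ge> 1)
                     \<and> reflexive_poly (length (rep_vec r x)) (Delta (rep_vec r x))
                     \<and> IDP (length (rep_vec r x)) (Delta (rep_vec r x))}"
    if ex: "\<exists>j. j + 1 < length r \<and> \<not> (r ! j) dvd (r ! (length r - 1))"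
  proof -
    obtain j where j: "j + 1 < length r" "\<not> (r ! j) dvd (r ! (d - 1))" using ex by (auto simp: d_def)
    define M where "M = sum_list r"
    have rle: "k < length r \<Longrightarrow> r ! k \<le> M" for k by (simp add: M_def elem_le_sum_list)
    have "{x::nat list. length x = length r \<and> (\<forall>k<length x. x ! k \<ge> 1)
                     \<and> reflexive_poly (length (rep_vec r x)) (Delta (rep_vec r x))
                     \<and> IDP (length (rep_vec r x)) (Delta (rep_vec r x))}
          \<subseteq> {xs. set xs \<subseteq> {0..M} \<and> length xs = length r}"
    proof (rule subsetI)
      fix x :: "nat list"
      assume "x \<in> {x::nat list. length x = length r \<and> (\<forall>k<length x. x ! k \<ge> 1)
                     \<and> reflexive_poly (length (rep_vec r x)) (Delta (rep_vec r x))
                     \<and> IDP (length (rep_vec r x)) (Delta (rep_vec r x))}"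
      hence x: "length x = length r" "\<forall>k<length x. x ! k \<ge> 1"
        "reflexive_poly (length (rep_vec r x)) (Delta (rep_vec r x))"
        "IDP (length (rep_vec r x)) (Delta (rep_vec r x))" by auto
      have "set x \<subseteq> {0..M}"
      proof
        fix v assume v: "v \<in> set x"
        then obtain k where k: "k < length r" "x ! k = v" using x(1) by (auto simp: in_set_conv_nth)
        show "v \<in> {0..M}"
        proof (cases "k + 1 < length r")
          case True
          have "x ! k * r ! k < r ! (k+1)" using A[of x k] x True by blast
          moreover have "r ! k \<ge> 1" using r_pos k by simp
          hence "x ! k \<le> x ! k * r ! k" by simp
          ultimately have "x ! k < r ! (k+1)" by linarith
          thus ?thesis using rle[OF True] k by simp
        next
          case False
          hence kd: "k = d - 1" using k by (simp add: d_def)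
          have "x ! (d-1) * (r ! (d-1) mod r ! j) < r ! j" using B[of x j] x j by blast
          moreover have "r ! (d-1) mod r ! j > 0" using j by (simp add: mod_greater_zero_iff_not_dvd)
          moreover have "x ! (d-1) \<le> x ! (d-1) * (r ! (d-1) mod r ! j)" using calculation(2) by simp
          ultimately have "x ! (d-1) < r ! j" by linarith
          moreover have "r ! j \<le> M" using rle[of j] j by simp
          ultimately show ?thesis using k kd by simp
        qed
      qed
      thus "x \<in> {xs. set xs \<subseteq> {0..M} \<and> length xs = length r}" using x(1) by simp
    qed
    moreover have "finite {xs. set xs \<subseteq> {0..M} \<and> length xs = length r}"
      by (rule finite_lists_length_eq) simp
    ultimately show ?thesis by (rule finite_subset)
  qed
  show ?thesis using part1 part2 by blast
qed

end
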